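(* Let $G$ be a graph and let $\mathcal{C}$ be a packing of $K_4(G)$ (i.e., a collection of pairwise vertex-disjoint vertex sets each inducing a complete graph on $4$ vertices in $G$), and write $V(\mathcal{C})$ for the union of the sets in $\mathcal{C}$. Let $\rho\ge 1$ and let $S$ be a $\rho$-approximation solution for \textsc{Bipartization} on $G-V(\mathcal{C})$, i.e., $S$ is an odd cycle transversal of $G-V(\mathcal{C})$ of size at most $\rho$ times the minimum size of an odd cycle transversal of $G-V(\mathcal{C})$. Then $S\cup V(\mathcal{C})$ is a $\max\{2,\rho\}$-approximation solution for \textsc{Bipartization} on $G$, i.e., it is an odd cycle transversal of $G$ of size at most $\max\{2,\rho\}$ times the minimum size of an odd cycle transversal of $G$.
   Context: An odd cycle transversal of a graph $G$ is a set $S\subseteq V(G)$ such that $G-S$ is bipartite. $K_4(G)$ denotes the family of vertex sets of copies of $K_4$ in $G$; a packing of a family of sets is a subfamily of pairwise disjoint sets. *)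

theory Defs
  imports Complex_Main
begin

definition graph :: "'a set \<Rightarrow> 'a set set \<Rightarrow> bool" where
  "graph V E \<longleftrightarrow> finite V \<and> (\<forall>e\<in>E. e \<subseteq> V \<and> card e = 2)"

text \<open>Edges of G - X (vertex deletion): vertex set is V - X.\<close>
definition del_edges :: "'a set set \<Rightarrow> 'a set \<Rightarrow> 'a set set" where
  "del_edges E X = {e \<in> E. e \<inter> X = {}}"

definition bipartite :: "'a set \<Rightarrow> 'a set set \<Rightarrow> bool" where
  "bipartite V E \<longleftrightarrow> (\<exists>A \<subseteq> V. \<forall>e\<in>E. card (e \<inter> A) = 1)"

definition oct :: "'a set \<Rightarrow> 'a set set \<Rightarrow> 'a set \<Rightarrow> bool" where
  "oct V E S \<longleftrightarrow> S \<subseteq> V \<and> bipartite (V - S) (del_edges E S)"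

definition oct_num :: "'a set \<Rightarrow> 'a set set \<Rightarrow> nat" where
  "oct_num V E = Min {card S | S. oct V E S}"

definition K4 :: "'a set \<Rightarrow> 'a set set \<Rightarrow> 'a set set" where
  "K4 V E = {K. K \<subseteq> V \<and> card K = 4 \<and> (\<forall>u\<in>K. \<forall>v\<in>K. u \<noteq> v \<longrightarrow> {u, v} \<in> E)}"

definition packing :: "'a set set \<Rightarrow> 'a set set \<Rightarrow> bool" where
  "packing \<F> \<C> \<longleftrightarrow> \<C> \<subseteq> \<F> \<and> (\<forall>X\<in>\<C>. \<forall>Y\<in>\<C>. X \<noteq> Y \<longrightarrow> X \<inter> Y = {})"

end

theory Submission
  imports Defs
begin

lemma card_inter_one: "a \<noteq> b \<Longrightarrow> card ({a,b} \<inter> A) = 1 \<longleftrightarrow> ((a \<in> A) \<noteq> (b \<in> A))"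
  by (cases "a \<in> A"; cases "b \<in> A") auto

lemma K4_oct_two:
  assumes K: "K \<in> K4 V E" and T: "oct V E T"
  shows "2 \<le> card (K \<inter> T)"
proof (rule ccontr)
  assume "\<not> 2 \<le> card (K \<inter> T)"
  hence c1: "card (K \<inter> T) \<le> 1" by simp
  have cK: "card K = 4" and KV: "K \<subseteq> V" and adj: "\<forall>u\<in>K. \<forall>v\<in>K. u \<noteq> v \<longrightarrow> {u, v} \<in> E"
    using K by (auto simp: K4_def)
  have fK: "finite K" using cK by (metis card.infinite zero_neq_numeral)
  have "card K = card (K - T) + card (K \<inter> T)"
    using fK by (metis Int_Diff_disjoint Un_Diff_Int card_Un_disjoint finite_Diff finite_Int inf_commute)
  hence "3 \<le> card (K - T)" using c1 cK by linarith
  then obtain B where B: "B \<subseteq> K - T" "card B = 3" by (meson obtain_subset_with_card_n)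
  then obtain a b c where abc: "B = {a,b,c}" "a \<noteq> b" "b \<noteq> c" "a \<noteq> c" by (auto simp: card_3_iff)
  from T obtain A where A: "\<forall>e\<in>del_edges E T. card (e \<inter> A) = 1"
    by (auto simp: oct_def bipartite_def)
  have "\<And>x y. x \<in> B \<Longrightarrow> y \<in> B \<Longrightarrow> x \<noteq> y \<Longrightarrow> (x \<in> A) \<noteq> (y \<in> A)"
  proof -
    fix x y assume "x \<in> B" "y \<in> B" "x \<noteq> y"
    hence "{x,y} \<in> del_edges E T" using B adj by (auto simp: del_edges_def)
    hence "card ({x,y} \<inter> A) = 1" using A by blast
    thus "(x \<in> A) \<noteq> (y \<in> A)" using card_inter_one \<open>x \<noteq> y\<close> by metis
  qed
  hence "(a \<in> A) \<noteq> (b \<in> A)" "(b \<in> A) \<noteq> (c \<in> A)" "(a \<in> A) \<noteq> (c \<in> A)"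
    using abc by auto
  thus False by blast
qed

lemma bip_mono:
  assumes "bipartite V' E'" "V'' \<subseteq> V'" "E'' \<subseteq> E'" "\<forall>e\<in>E''. e \<subseteq> V''"
  shows "bipartite V'' E''"
proof -
  obtain A where A: "A \<subseteq> V'" "\<forall>e\<in>E'. card (e \<inter> A) = 1" using assms(1) by (auto simp: bipartite_def)
  have "\<forall>e\<in>E''. card (e \<inter> (A \<inter> V'')) = 1"
  proof
    fix e assume e: "e \<in> E''"
    hence "e \<inter> (A \<inter> V'') = e \<inter> A" using assms(4) by auto
    thus "card (e \<inter> (A \<inter> V'')) = 1" using A e assms(3) by auto
  qed
  thus ?thesis unfolding bipartite_def by blast
qed

lemma octfin_lem: "finite V' \<Longrightarrow> finite {card S | S. oct V' E' S}"
proof -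
  assume f: "finite V'"
  have "{card S | S. oct V' E' S} \<subseteq> card ` Pow V'" by (auto simp: oct_def)
  thus ?thesis using f by (meson finite_Pow_iff finite_imageI finite_subset)
qed

lemma del_del: "del_edges (del_edges E X) Y = del_edges E (X \<union> Y)"
  by (auto simp: del_edges_def)

theorem lemma4:
  fixes V :: "'a set" and E :: "'a set set" and \<C> :: "'a set set"
    and S :: "'a set" and \<rho> :: real
  assumes "graph V E"
    and "packing (K4 V E) \<C>"
    and "\<rho> \<ge> 1"
    and "oct (V - \<Union>\<C>) (del_edges E (\<Union>\<C>)) S"
    and "real (card S) \<le> \<rho> * real (oct_num (V - \<Union>\<C>) (del_edges E (\<Union>\<C>)))"
  shows "oct V E (S \<union> \<Union>\<C>)
     \<and> real (card (S \<union> \<Union>\<C>)) \<le> max 2 \<rho> * real (oct_num V E)"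
proof -
  let ?U = "\<Union>\<C>"
  have fV: "finite V" using assms(1) by (simp add: graph_def)
  have CK: "\<C> \<subseteq> K4 V E" and disj: "\<forall>X\<in>\<C>. \<forall>Y\<in>\<C>. X \<noteq> Y \<longrightarrow> X \<inter> Y = {}"
    using assms(2) by (auto simp: packing_def)
  have UV: "?U \<subseteq> V" using CK by (auto simp: K4_def)
  have fC: "finite \<C>" using UV fV by (meson Sup_le_iff finite_UnionD finite_subset)
  have SV: "S \<subseteq> V - ?U" using assms(4) by (simp add: oct_def)
  have oct1: "oct V E (S \<union> ?U)"
  proof -
    have "V - (S \<union> ?U) = (V - ?U) - S" by auto
    moreover have "del_edges E (S \<union> ?U) = del_edges (del_edges E ?U) S"
      by (simp add: del_del Un_commute)
    ultimately show ?thesis using assms(4) SV UV by (auto simp: oct_def)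
  qed
  note octfin = octfin_lem
  have "oct_num V E \<in> {card S | S. oct V E S}"
    unfolding oct_num_def
  proof (rule Min_in)
    show "finite {card S | S. oct V E S}" using octfin[OF fV] .
    show "{card S | S. oct V E S} \<noteq> {}" using oct1 by blast
  qed
  then obtain T where T: "oct V E T" "card T = oct_num V E" by auto
  have TV: "T \<subseteq> V" using T by (simp add: oct_def)
  have fT: "finite T" using TV fV finite_subset by blast
  have octT: "oct (V - ?U) (del_edges E ?U) (T - ?U)"
  proof -
    have b: "bipartite (V - T) (del_edges E T)" using T by (simp add: oct_def)
    have "bipartite ((V - ?U) - (T - ?U)) (del_edges (del_edges E ?U) (T - ?U))"
    proof (rule bip_mono[OF b])
      show "\<forall>e\<in>del_edges (del_edges E ?U) (T - ?U). e \<subseteq> V - ?U - (T - ?U)"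
        using assms(1) by (auto simp: del_edges_def graph_def)
    qed (auto simp: del_edges_def)
    thus ?thesis using TV by (auto simp: oct_def)
  qed
  have le1: "oct_num (V - ?U) (del_edges E ?U) \<le> card (T - ?U)"
    unfolding oct_num_def using octfin[of "V - ?U"] fV octT by (intro Min_le) auto
  have cardK: "\<And>K. K \<in> \<C> \<Longrightarrow> card K = 4" using CK by (auto simp: K4_def)
  have fKs: "\<And>K. K \<in> \<C> \<Longrightarrow> finite K" using UV fV by (meson Sup_upper finite_subset subset_trans)
  have cU: "card ?U = (\<Sum>K\<in>\<C>. card K)"
    using card_UN_disjoint[OF fC, of id] fKs disj by simp
  have cTU: "card (T \<inter> ?U) = (\<Sum>K\<in>\<C>. card (K \<inter> T))"
  proof -
    have "T \<inter> ?U = (\<Union>K\<in>\<C>. K \<inter> T)" by auto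
    moreover have "card (\<Union>K\<in>\<C>. K \<inter> T) = (\<Sum>K\<in>\<C>. card (K \<inter> T))"
      using disj fKs by (intro card_UN_disjoint[OF fC]) auto
    ultimately show ?thesis by simp
  qed
  have "(\<Sum>K\<in>\<C>. card K) \<le> (\<Sum>K\<in>\<C>. 2 * card (K \<inter> T))"
  proof (rule sum_mono)
    fix K assume "K \<in> \<C>"
    thus "card K \<le> 2 * card (K \<inter> T)" using cardK K4_oct_two[OF _ T(1)] CK by fastforce
  qed
  hence U2: "card ?U \<le> 2 * card (T \<inter> ?U)" using cU cTU by (simp add: sum_distrib_left)
  have cT: "card T = card (T - ?U) + card (T \<inter> ?U)"
    using fT by (metis Int_Diff_disjoint Un_Diff_Int card_Un_disjoint finite_Diff finite_Int inf_commute)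
  have cSU: "card (S \<union> ?U) \<le> card S + card ?U" by (rule card_Un_le)
  define a where "a = real (card (T - ?U))"
  define b where "b = real (card (T \<inter> ?U))"
  have a0: "a \<ge> 0" "b \<ge> 0" by (auto simp: a_def b_def)
  have "real (card S) \<le> \<rho> * a"
    using assms(5) le1 assms(3) unfolding a_def
    by (meson le_trans mult_left_mono of_nat_le_iff order_trans zero_le_one)
  moreover have "real (card ?U) \<le> 2 * b" using U2 unfolding b_def by linarith
  moreover have "\<rho> * a \<le> max 2 \<rho> * a" using a0 by (intro mult_right_mono) auto
  moreover have "2 * b \<le> max 2 \<rho> * b" using a0 by (intro mult_right_mono) auto
  moreover have "real (oct_num V E) = a + b" using T(2) cT unfolding a_def b_def by simp
  moreover have "real (card (S \<union> ?U)) \<le> real (card S) + real (card ?U)" using cSU by linarith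
  ultimately have "real (card (S \<union> ?U)) \<le> max 2 \<rho> * real (oct_num V E)"
    by (simp add: distrib_left)
  with oct1 show ?thesis by simp
qed

end
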